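(* Let $\mathcal{G}$ be a class of graphs on vertex set $[p]$, fix $\lambda>0$, and let $\mathcal{T}\subseteq\mathcal{G}$. For every $\epsilon>0$ and every $\epsilon$-covering $C_{\mathcal{T}}(\epsilon)$ of $\mathcal{T}$, every estimator $\phi$ satisfies $$p_{\max}\;\ge\;1-\frac{\log|C_{\mathcal{T}}(\epsilon)|+n\epsilon+\log 2}{\log|\mathcal{T}|}.$$
   Context: For a graph $G=([p],E)$ and $\lambda>0$, the Ising model is $f_G(\mathbf{x})=\frac{1}{Z}\exp\big(\sum_{(i,j)\in E}\lambda x_ix_j\big)$ on $\{-1,+1\}^p$. An estimator is a map $\phi:\{-1,+1\}^{np}\to\mathcal{G}$ applied to $n$ i.i.d. samples from $f_G$, giving $\hat G$; $p_{\max}=\max_{G\in\mathcal{G}}\Pr(\hat G\ne G)$. $D(f\|g)=\sum_x f(x)\log(f(x)/g(x))$ is the KL-divergence. An $\epsilon$-covering of $\mathcal{T}$ is a set $C_{\mathcal{T}}(\epsilon)\subseteq\mathcal{G}$ such that for every $G\in\mathcal{T}$ there is $G'\in C_{\mathcal{T}}(\epsilon)$ with $D(f_G\|f_{G'})\le\epsilon$. *)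

theory Defs
  imports "HOL-Analysis.Analysis"
begin

definition graphs_on :: "nat \<Rightarrow> nat set set set" where
  "graphs_on p = {E. \<forall>e\<in>E. e \<subseteq> {..<p} \<and> card e = 2}"

definition configs :: "nat \<Rightarrow> (nat \<Rightarrow> real) set" where
  "configs p = PiE {..<p} (\<lambda>_. {-1, 1})"

definition ising_weight :: "real \<Rightarrow> nat set set \<Rightarrow> (nat \<Rightarrow> real) \<Rightarrow> real" where
  "ising_weight lam G x = exp (\<Sum>e\<in>G. lam * (\<Prod>i\<in>e. x i))"

definition partition_fn :: "nat \<Rightarrow> real \<Rightarrow> nat set set \<Rightarrow> real" where
  "partition_fn p lam G = (\<Sum>x\<in>configs p. ising_weight lam G x)"

definition ising :: "nat \<Rightarrow> real \<Rightarrow> nat set set \<Rightarrow> (nat \<Rightarrow> real) \<Rightarrow> real" where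
  "ising p lam G x = ising_weight lam G x / partition_fn p lam G"

definition KL_ising :: "nat \<Rightarrow> real \<Rightarrow> nat set set \<Rightarrow> nat set set \<Rightarrow> real" where
  "KL_ising p lam G G' =
     (\<Sum>x\<in>configs p. ising p lam G x * ln (ising p lam G x / ising p lam G' x))"

definition is_covering ::
  "nat \<Rightarrow> real \<Rightarrow> nat set set set \<Rightarrow> nat set set set \<Rightarrow> real \<Rightarrow> nat set set set \<Rightarrow> bool" where
  "is_covering p lam \<G> T eps C \<longleftrightarrow>
     C \<subseteq> \<G> \<and> (\<forall>G\<in>T. \<exists>G'\<in>C. KL_ising p lam G G' \<le> eps)"

definition samples :: "nat \<Rightarrow> nat \<Rightarrow> (nat \<Rightarrow> nat \<Rightarrow> real) set" where
  "samples p n = PiE {..<n} (\<lambda>_. configs p)"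

definition err_prob ::
  "nat \<Rightarrow> real \<Rightarrow> nat \<Rightarrow> ((nat \<Rightarrow> nat \<Rightarrow> real) \<Rightarrow> nat set set) \<Rightarrow> nat set set \<Rightarrow> real" where
  "err_prob p lam n phi G =
     (\<Sum>X\<in>samples p n. (if phi X \<noteq> G then (\<Prod>k<n. ising p lam G (X k)) else 0))"

definition p_max ::
  "nat \<Rightarrow> real \<Rightarrow> nat \<Rightarrow> nat set set set \<Rightarrow> ((nat \<Rightarrow> nat \<Rightarrow> real) \<Rightarrow> nat set set) \<Rightarrow> real" where
  "p_max p lam n \<G> phi = Max ((\<lambda>G. err_prob p lam n phi G) ` \<G>)"

end

theory Submission imports Defs begin

lemma configs_finite: "finite (configs p)"
  unfolding configs_def by (intro finite_PiE) auto

lemma configs_ne: "configs p \<noteq> {}"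
  unfolding configs_def by (simp add: PiE_eq_empty_iff)

lemma samples_finite: "finite (samples p n)"
  unfolding samples_def by (intro finite_PiE) (auto simp: configs_finite)

lemma partition_pos: "partition_fn p lam G > 0"
  unfolding partition_fn_def ising_weight_def
  using configs_finite configs_ne by (intro sum_pos) auto

lemma ising_pos: "ising p lam G x > 0"
  unfolding ising_def using partition_pos[of p lam G] by (simp add: ising_weight_def)

lemma ising_ne: "ising p lam G x \<noteq> 0"
  using ising_pos[of p lam G x] by simp

lemma ising_sum: "(\<Sum>x\<in>configs p. ising p lam G x) = 1"
  unfolding ising_def using partition_pos[of p lam G]
  by (simp add: sum_divide_distrib[symmetric] partition_fn_def)

lemma PX_pos: "(\<Prod>k<n. ising p lam G (X k)) > 0"
  by (intro prod_pos) (simp add: ising_pos)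

lemma PX_sum: "(\<Sum>X\<in>samples p n. \<Prod>k<n. ising p lam G (X k)) = 1"
proof -
  have "(\<Sum>X\<in>samples p n. \<Prod>k<n. ising p lam G (X k)) = (\<Prod>k<n. \<Sum>x\<in>configs p. ising p lam G x)"
    unfolding samples_def by (subst prod_sum_PiE) (auto simp: configs_finite)
  then show ?thesis by (simp add: ising_sum)
qed

lemma PX_KL:
  "(\<Sum>X\<in>samples p n. (\<Prod>k<n. ising p lam G (X k)) *
      ln ((\<Prod>k<n. ising p lam G (X k)) / (\<Prod>k<n. ising p lam G' (X k))))
   = n * KL_ising p lam G G'"
proof -
  let ?f = "ising p lam G" and ?g = "ising p lam G'"
  let ?h = "\<lambda>x. ln (?f x / ?g x)"
  have lnsplit: "ln ((\<Prod>k<n. ?f (X k)) / (\<Prod>k<n. ?g (X k))) = (\<Sum>j<n. ?h (X j))" for X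
  proof -
    have "(\<Prod>k<n. ?f (X k)) / (\<Prod>k<n. ?g (X k)) = (\<Prod>k<n. ?f (X k) / ?g (X k))"
      by (simp add: prod_dividef)
    also have "ln \<dots> = (\<Sum>j<n. ?h (X j))"
      by (subst ln_prod) (auto simp: ising_pos ising_ne)
    finally show ?thesis by simp
  qed
  have one: "(\<Sum>X\<in>samples p n. (\<Prod>k<n. ?f (X k)) * ?h (X j)) = KL_ising p lam G G'" if j: "j < n" for j
  proof -
    have "(\<Sum>X\<in>samples p n. (\<Prod>k<n. ?f (X k)) * ?h (X j))
        = (\<Sum>X\<in>samples p n. \<Prod>k<n. (if k = j then ?f (X k) * ?h (X k) else ?f (X k)))"
    proof (rule sum.cong[OF refl])
      fix X
      have "(\<Prod>k<n. (if k = j then ?f (X k) * ?h (X k) else ?f (X k)))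
          = (?f (X j) * ?h (X j)) * (\<Prod>k\<in>{..<n} - {j}. ?f (X k))"
        using j by (subst prod.remove[of _ j]) auto
      also have "\<dots> = ?h (X j) * (?f (X j) * (\<Prod>k\<in>{..<n} - {j}. ?f (X k)))" by simp
      also have "?f (X j) * (\<Prod>k\<in>{..<n} - {j}. ?f (X k)) = (\<Prod>k<n. ?f (X k))"
        using j by (subst prod.remove[of _ j]) auto
      finally show "(\<Prod>k<n. ?f (X k)) * ?h (X j) = (\<Prod>k<n. (if k = j then ?f (X k) * ?h (X k) else ?f (X k)))"
        by simp
    qed
    also have "\<dots> = (\<Prod>k<n. \<Sum>x\<in>configs p. (if k = j then ?f x * ?h x else ?f x))"
      unfolding samples_def by (subst prod_sum_PiE) (auto simp: configs_finite)
    also have "\<dots> = (\<Prod>k<n. (if k = j then KL_ising p lam G G' else 1))"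
      by (intro prod.cong refl) (auto simp: ising_sum KL_ising_def)
    also have "\<dots> = KL_ising p lam G G'"
      using j by (simp add: prod.If_cases)
    finally show ?thesis .
  qed
  have "(\<Sum>X\<in>samples p n. (\<Prod>k<n. ?f (X k)) * ln ((\<Prod>k<n. ?f (X k)) / (\<Prod>k<n. ?g (X k))))
      = (\<Sum>X\<in>samples p n. \<Sum>j<n. (\<Prod>k<n. ?f (X k)) * ?h (X j))"
    by (simp add: lnsplit sum_distrib_left)
  also have "\<dots> = (\<Sum>j<n. \<Sum>X\<in>samples p n. (\<Prod>k<n. ?f (X k)) * ?h (X j))"
    by (rule sum.swap)
  also have "\<dots> = (\<Sum>j<n. KL_ising p lam G G')"
    by (intro sum.cong refl one) auto
  finally show ?thesis by simp
qed

lemma gibbs: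
  fixes P R g :: "'a \<Rightarrow> real"
  assumes I: "finite I" and P: "\<And>i. i \<in> I \<Longrightarrow> P i > 0" and R: "\<And>i. i \<in> I \<Longrightarrow> R i > 0"
    and s: "sum P I = 1"
  shows "(\<Sum>i\<in>I. P i * g i) - (\<Sum>i\<in>I. P i * ln (P i / R i)) \<le> ln (\<Sum>i\<in>I. R i * exp (g i))"
proof -
  have ne: "I \<noteq> {}" using s by auto
  define Z where "Z = (\<Sum>i\<in>I. R i * exp (g i))"
  have Z: "Z > 0" unfolding Z_def using I ne R by (intro sum_pos) auto
  have pt: "P i * (g i - ln (P i / R i) - ln Z) \<le> R i * exp (g i) / Z - P i" if i: "i \<in> I" for i
  proof -
    have pos: "R i * exp (g i) / (P i * Z) > 0" using P[OF i] R[OF i] Z by auto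
    have "g i - ln (P i / R i) - ln Z = ln (R i * exp (g i) / (P i * Z))"
      using P[OF i] R[OF i] Z by (simp add: ln_div ln_mult)
    also have "\<dots> \<le> R i * exp (g i) / (P i * Z) - 1" by (rule ln_le_minus_one[OF pos])
    finally have "P i * (g i - ln (P i / R i) - ln Z) \<le> P i * (R i * exp (g i) / (P i * Z) - 1)"
      using P[OF i] by (intro mult_left_mono) auto
    also have "\<dots> = R i * exp (g i) / Z - P i" using P[OF i] by (simp add: field_simps)
    finally show ?thesis .
  qed
  have "(\<Sum>i\<in>I. P i * (g i - ln (P i / R i) - ln Z)) \<le> (\<Sum>i\<in>I. R i * exp (g i) / Z - P i)"
    by (rule sum_mono) (rule pt)
  also have "\<dots> = 0" using Z s by (simp add: sum_subtractf sum_divide_distrib[symmetric] Z_def)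
  finally have "(\<Sum>i\<in>I. P i * g i) - (\<Sum>i\<in>I. P i * ln (P i / R i)) - (\<Sum>i\<in>I. P i) * ln Z \<le> 0"
    by (simp add: algebra_simps sum_subtractf sum.distrib sum_distrib_left sum_distrib_right)
  then show ?thesis using s by (simp add: Z_def)
qed

lemma graphs_finite: "finite (graphs_on p)"
proof -
  have "graphs_on p \<subseteq> Pow (Pow {..<p})" unfolding graphs_on_def by auto
  then show ?thesis by (rule finite_subset) auto
qed

theorem corollary2:
  fixes p n :: nat and lam eps :: real
    and \<G> T C :: "nat set set set"
    and phi :: "(nat \<Rightarrow> nat \<Rightarrow> real) \<Rightarrow> nat set set"
  assumes "\<G> \<subseteq> graphs_on p"
    and "lam > 0"
    and "T \<subseteq> \<G>"
    and "card T \<ge> 2"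
    and "eps > 0"
    and "is_covering p lam \<G> T eps C"
    and "\<forall>X\<in>samples p n. phi X \<in> \<G>"
  shows "p_max p lam n \<G> phi \<ge>
           1 - (ln (card C) + n * eps + ln 2) / ln (card T)"
proof -
  define S where "S = samples p n"
  define PX where "PX G X = (\<Prod>k<n. ising p lam G (X k))" for G X
  define m where "m = real (card T)"
  have Gfin: "finite \<G>" using assms(1) graphs_finite finite_subset by blast
  have Tfin: "finite T" using assms(4) card.infinite by fastforce
  have Tne: "T \<noteq> {}" using assms(4) by auto
  have m2: "m \<ge> 2" using assms(4) unfolding m_def by simp
  have Csub: "C \<subseteq> \<G>" and cov: "\<forall>G\<in>T. \<exists>G'\<in>C. KL_ising p lam G G' \<le> eps"
    using assms(6) unfolding is_covering_def by auto
  have Cfin: "finite C" using Csub Gfin finite_subset by blast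
  have Cne: "C \<noteq> {}" using cov Tne by blast
  define c where "c = real (card C)"
  have c1: "c \<ge> 1" unfolding c_def using Cfin Cne by (simp add: Suc_le_eq card_gt_0_iff)
  have Sfin: "finite S" unfolding S_def by (rule samples_finite)
  have PXpos: "PX G X > 0" for G X unfolding PX_def by (rule PX_pos)
  have PXsum: "(\<Sum>X\<in>S. PX G X) = 1" for G unfolding PX_def S_def by (rule PX_sum)
  define Q where "Q X = (\<Sum>G'\<in>C. PX G' X) / c" for X
  have Qpos: "Q X > 0" for X unfolding Q_def using c1 Cfin Cne PXpos
    by (intro divide_pos_pos sum_pos) auto
  define B where "B = ln c + n * eps"
  have DG: "(\<Sum>X\<in>S. PX G X * ln (PX G X / Q X)) \<le> B" if G: "G \<in> T" for G
  proof -
    obtain G' where G': "G' \<in> C" "KL_ising p lam G G' \<le> eps" using cov G by blast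
    have pt: "PX G X * ln (PX G X / Q X) \<le> PX G X * ln c + PX G X * ln (PX G X / PX G' X)" for X
    proof -
      have "PX G' X \<le> (\<Sum>G'\<in>C. PX G' X)"
        using G' Cfin PXpos by (intro member_le_sum) (auto intro: less_imp_le)
      then have "PX G' X / c \<le> Q X" unfolding Q_def using c1 by (simp add: divide_right_mono)
      then have "PX G X / Q X \<le> PX G X / (PX G' X / c)"
        using PXpos[of G X] PXpos[of G' X] c1 Qpos[of X] by (intro divide_left_mono) auto
      then have "ln (PX G X / Q X) \<le> ln (PX G X / (PX G' X / c))"
        using PXpos[of G X] PXpos[of G' X] c1 Qpos[of X] by (subst ln_le_cancel_iff) auto
      also have "\<dots> = ln c + ln (PX G X / PX G' X)"
        using PXpos[of G X] PXpos[of G' X] c1 by (simp add: ln_div ln_mult)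
      finally show ?thesis using PXpos[of G X]
        by (metis distrib_left mult_left_mono less_imp_le)
    qed
    have "(\<Sum>X\<in>S. PX G X * ln (PX G X / Q X)) \<le> (\<Sum>X\<in>S. PX G X * ln c + PX G X * ln (PX G X / PX G' X))"
      by (rule sum_mono) (rule pt)
    also have "\<dots> = ln c + n * KL_ising p lam G G'"
      using PXsum[of G] PX_KL[where n=n and p=p and lam=lam and G=G and G'=G']
      by (simp add: sum.distrib sum_distrib_right[symmetric] PX_def S_def)
    also have "\<dots> \<le> B" unfolding B_def using G' by (simp add: mult_left_mono)
    finally show ?thesis .
  qed
  define succ where "succ G = (\<Sum>X\<in>S. if phi X = G then PX G X else 0)" for G
  define sbar where "sbar = (\<Sum>G\<in>T. succ G) / m"
  define I where "I = T \<times> S"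
  define P where "P = (\<lambda>(G, X). PX G X / m)"
  define R where "R = (\<lambda>(G::nat set set, X::nat\<Rightarrow>nat\<Rightarrow>real). Q X / m)"
  define g where "g = (\<lambda>(G, X). if phi X = G then ln m else 0)"
  have Ifin: "finite I" unfolding I_def using Tfin Sfin by simp
  have Psum: "sum P I = 1"
  proof -
    have "sum P I = (\<Sum>G\<in>T. \<Sum>X\<in>S. PX G X / m)"
      unfolding I_def P_def by (subst sum.cartesian_product) simp
    also have "\<dots> = (\<Sum>G\<in>T. 1 / m)" by (simp add: sum_divide_distrib[symmetric] PXsum)
    also have "\<dots> = 1" using m2 unfolding m_def by simp
    finally show ?thesis .
  qed
  have gib: "(\<Sum>i\<in>I. P i * g i) - (\<Sum>i\<in>I. P i * ln (P i / R i)) \<le> ln (\<Sum>i\<in>I. R i * exp (g i))"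
    using m2 Ifin Psum PXpos Qpos
    by (intro gibbs) (auto simp: P_def R_def)
  have t1: "(\<Sum>i\<in>I. P i * g i) = ln m * sbar"
  proof -
    have "(\<Sum>i\<in>I. P i * g i) = (\<Sum>G\<in>T. \<Sum>X\<in>S. PX G X / m * (if phi X = G then ln m else 0))"
      unfolding I_def by (subst sum.cartesian_product) (auto simp: P_def g_def intro!: sum.cong)
    also have "\<dots> = (\<Sum>G\<in>T. ln m / m * succ G)"
      unfolding succ_def sum_distrib_left by (intro sum.cong refl) auto
    also have "\<dots> = ln m * sbar" unfolding sbar_def by (simp add: sum_distrib_left[symmetric] sum_divide_distrib[symmetric])
    finally show ?thesis .
  qed
  have t2: "(\<Sum>i\<in>I. P i * ln (P i / R i)) \<le> B"
  proof -
    have "(\<Sum>i\<in>I. P i * ln (P i / R i)) = (\<Sum>G\<in>T. (\<Sum>X\<in>S. PX G X * ln (PX G X / Q X)) / m)"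
      unfolding I_def sum_divide_distrib
      by (subst sum.cartesian_product) (auto simp: P_def R_def intro!: sum.cong)
    also have "\<dots> \<le> (\<Sum>G\<in>T. B / m)"
      using m2 DG by (intro sum_mono divide_right_mono) auto
    also have "\<dots> = B" using m2 unfolding m_def by simp
    finally show ?thesis .
  qed
  have t3: "(\<Sum>i\<in>I. R i * exp (g i)) \<le> 2"
  proof -
    have inner: "(\<Sum>G\<in>T. exp (if phi X = G then ln m else 0)) \<le> 2 * m" for X
    proof -
      have "(\<Sum>G\<in>T. exp (if phi X = G then ln m else 0)) \<le> (\<Sum>G\<in>T. 1 + (if phi X = G then m else 0))"
        using m2 by (intro sum_mono) auto
      also have "\<dots> = m + (if phi X \<in> T then m else 0)"
        using Tfin by (simp add: sum.distrib m_def)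
      also have "\<dots> \<le> 2 * m" using m2 by simp
      finally show ?thesis .
    qed
    have "(\<Sum>i\<in>I. R i * exp (g i)) = (\<Sum>X\<in>S. Q X / m * (\<Sum>G\<in>T. exp (if phi X = G then ln m else 0)))"
      unfolding I_def sum_distrib_left
      by (subst sum.swap, subst sum.cartesian_product) (auto simp: R_def g_def intro!: sum.cong)
    also have "\<dots> \<le> (\<Sum>X\<in>S. Q X / m * (2 * m))"
      using m2 Qpos inner by (intro sum_mono mult_left_mono) (auto intro: less_imp_le)
    also have "\<dots> = 2 * (\<Sum>X\<in>S. Q X)" using m2 by (simp add: sum_distrib_right[symmetric] mult.commute)
    also have "(\<Sum>X\<in>S. Q X) = 1"
    proof -
      have "(\<Sum>X\<in>S. Q X) = (\<Sum>G'\<in>C. \<Sum>X\<in>S. PX G' X) / c"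
        unfolding Q_def by (simp add: sum_divide_distrib[symmetric] sum.swap[of _ C])
      also have "\<dots> = 1" using c1 by (simp add: PXsum c_def)
      finally show ?thesis .
    qed
    finally show ?thesis by simp
  qed
  have lnm: "ln m > 0" using m2 by simp
  have "ln m * sbar \<le> B + ln 2"
  proof -
    have "ln (\<Sum>i\<in>I. R i * exp (g i)) \<le> ln 2"
      using t3 Ifin Qpos m2 Psum by (subst ln_le_cancel_iff) (auto simp: R_def intro!: sum_pos split: prod.splits)
    then show ?thesis using gib t1 t2 by linarith
  qed
  then have sb: "sbar \<le> (B + ln 2) / ln m" using lnm by (simp add: field_simps)
  have err: "err_prob p lam n phi G = 1 - succ G" for G
  proof -
    have "err_prob p lam n phi G = (\<Sum>X\<in>S. PX G X - (if phi X = G then PX G X else 0))"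
      unfolding err_prob_def S_def PX_def by (intro sum.cong) auto
    then show ?thesis by (simp add: sum_subtractf PXsum succ_def)
  qed
  have "(\<Sum>G\<in>T. err_prob p lam n phi G) \<le> (\<Sum>G\<in>T. p_max p lam n \<G> phi)"
    unfolding p_max_def using Gfin assms(3) by (intro sum_mono Max_ge) auto
  then have "(\<Sum>G\<in>T. 1 - succ G) \<le> m * p_max p lam n \<G> phi" by (simp add: err m_def)
  then have "m - m * sbar \<le> m * p_max p lam n \<G> phi"
    using m2 by (simp add: sum_subtractf sbar_def m_def)
  then have "1 - sbar \<le> p_max p lam n \<G> phi" using m2
    by (metis mult.right_neutral right_diff_distrib mult_le_cancel_left_pos less_le_trans zero_less_numeral)
  then show ?thesis using sb unfolding B_def m_def c_def by linarith
qed

end
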